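(* Let $k$ be an algebraically closed field with $\operatorname{char}(k)\neq 2$, let $\alpha\in k$ with $\alpha(1-\alpha^2)\neq 0$, and let $A(\alpha)$ be the $k$-algebra on degree-one generators $x_1,\dots,x_4$ with defining relations \[ x_3x_1+x_1x_3=0,\quad x_3x_2-x_2x_3=0,\quad 2x_2^2+\alpha x_3^2=x_1^2,\quad x_4x_1+x_1x_4=0,\quad x_2^2-x_4^2=0,\quad x_4x_2+x_2x_4=x_3^2 . \] Let $\Gamma\subset\mathbb P^3\times\mathbb P^3$ be the point scheme of $A(\alpha)$, i.e. the zero locus of these six relations, where $\sum c_{ij}x_ix_j$ is evaluated at $(p,q)$ as $\sum c_{ij}p_iq_j$. Let $\mathfrak p$ be the projection of $\Gamma$ to the first factor and $\sigma$ the automorphism of $\mathfrak p$ whose graph is $\Gamma$. Then the points of $\Gamma$ are closed, of the form $(q,\sigma(q))$, and are exactly: (o) $(e_1,e_2),(e_2,e_1),(e_3,e_4),(e_4,e_3)$, where $e_1,\dots,e_4$ are the coordinate points; (i) $((\lambda_1,1,\lambda_3,1),(-\lambda_1,1,\lambda_3,1))$ with $\lambda_1^2=-2(1+\alpha)$, $\lambda_3^2=2$; (ii) $((\lambda_1,-1,\lambda_3,1),(-\lambda_1,-1,\lambda_3,1))$ with $\lambda_1^2=-2(1-\alpha)$, $\lambda_3^2=-2$; (iii) $((\lambda_1,\lambda_2,0,1),(-\lambda_1,-\lambda_2,0,1))$ with $\lambda_1^2=-2$, $\lambda_2^2=-1$; (iv) $((0,\lambda_2,\lambda_3,1),(0,\lambda_2,\lambda_3,\lambda_2^2))$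 with $\alpha\lambda_2^2+2\lambda_2+\alpha=0$, $\alpha\lambda_3^2=-2\lambda_2^2$. Furthermore, $\sigma(Z_i)=Z_i$ for every $i=0,\dots,4$, and $\sigma$ has ten orbits of order two, where $Z_0=\{e_1,\dots,e_4\}$ and $Z_1,\dots,Z_4$ are the sets of first coordinates of the points listed in (i)–(iv) respectively.
   Context: It is known (and used by the paper) that for this algebra $\Gamma$ is the graph of an automorphism $\sigma$ of $\mathfrak p$. *)

theory Defs
  imports "HOL-Computational_Algebra.Polynomial"
begin

definition alg_closed :: "'k::field itself \<Rightarrow> bool" where
  "alg_closed _ \<longleftrightarrow> (\<forall>p :: 'k poly. degree p \<ge> 1 \<longrightarrow> (\<exists>x. poly p x = 0))"

text \<open>Vectors in k^4 (homogeneous coordinates of points of P^3).\<close>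
datatype 'k pt4 = P4 'k 'k 'k 'k

fun smul4 :: "'k::times \<Rightarrow> 'k pt4 \<Rightarrow> 'k pt4" where
  "smul4 c (P4 a b d e) = P4 (c*a) (c*b) (c*d) (c*e)"

definition zero4 :: "'k::zero pt4" where "zero4 = P4 0 0 0 0"

definition proj_class :: "'k::field pt4 \<Rightarrow> 'k pt4 set" where
  "proj_class p = {q. q \<noteq> zero4 \<and> (\<exists>c. c \<noteq> 0 \<and> q = smul4 c p)}"

fun rels :: "'k::field \<Rightarrow> 'k pt4 \<Rightarrow> 'k pt4 \<Rightarrow> bool" where
  "rels \<alpha> (P4 p1 p2 p3 p4) (P4 q1 q2 q3 q4) \<longleftrightarrow>
     p3*q1 + p1*q3 = 0 \<and>
     p3*q2 - p2*q3 = 0 \<and>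
     2*p2*q2 + \<alpha>*p3*q3 - p1*q1 = 0 \<and>
     p4*q1 + p1*q4 = 0 \<and>
     p2*q2 - p4*q4 = 0 \<and>
     p4*q2 + p2*q4 - p3*q3 = 0"

text \<open>The point scheme Gamma, as the set of pairs of points of P^3 (closed points).\<close>
definition Gamma :: "'k::field \<Rightarrow> ('k pt4 set \<times> 'k pt4 set) set" where
  "Gamma \<alpha> = {(proj_class p, proj_class q) | p q.
       p \<noteq> zero4 \<and> q \<noteq> zero4 \<and> rels \<alpha> p q}"

definition frakp :: "'k::field \<Rightarrow> 'k pt4 set set" where
  "frakp \<alpha> = fst ` Gamma \<alpha>"

definition sigma :: "'k::field \<Rightarrow> 'k pt4 set \<Rightarrow> 'k pt4 set" where
  "sigma \<alpha> P = (THE Q. (P, Q) \<in> Gamma \<alpha>)"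

definition sigma_orbit :: "'k::field \<Rightarrow> 'k pt4 set \<Rightarrow> 'k pt4 set set" where
  "sigma_orbit \<alpha> P = {((sigma \<alpha>) ^^ n) P | n. True}"

fun L :: "'k::field \<Rightarrow> nat \<Rightarrow> ('k pt4 \<times> 'k pt4) set" where
  "L \<alpha> 0 = {(P4 1 0 0 0, P4 0 1 0 0), (P4 0 1 0 0, P4 1 0 0 0),
             (P4 0 0 1 0, P4 0 0 0 1), (P4 0 0 0 1, P4 0 0 1 0)}"
| "L \<alpha> (Suc 0) = {(P4 l1 1 l3 1, P4 (-l1) 1 l3 1) | l1 l3.
             l1^2 = -2*(1+\<alpha>) \<and> l3^2 = 2}"
| "L \<alpha> (Suc (Suc 0)) = {(P4 l1 (-1) l3 1, P4 (-l1) (-1) l3 1) | l1 l3.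
             l1^2 = -2*(1-\<alpha>) \<and> l3^2 = -2}"
| "L \<alpha> (Suc (Suc (Suc 0))) = {(P4 l1 l2 0 1, P4 (-l1) (-l2) 0 1) | l1 l2.
             l1^2 = -2 \<and> l2^2 = -1}"
| "L \<alpha> (Suc (Suc (Suc (Suc 0)))) = {(P4 0 l2 l3 1, P4 0 l2 l3 (l2^2)) | l2 l3.
             \<alpha>*l2^2 + 2*l2 + \<alpha> = 0 \<and> \<alpha>*l3^2 = -2*l2^2}"
| "L \<alpha> _ = {}"

definition Z :: "'k::field \<Rightarrow> nat \<Rightarrow> 'k pt4 set set" where
  "Z \<alpha> i = (\<lambda>(a, b). proj_class a) ` L \<alpha> i"

end

theory Submission
  imports Defs
begin


lemma smul4_smul4[simp]: "smul4 (c::'k::field) (smul4 d p) = smul4 (c*d) p"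
  by (cases p) (simp add: mult.assoc)
lemma smul4_1[simp]: "smul4 (1::'k::field) p = p" by (cases p) simp
lemma smul4_zero_iff: "smul4 (c::'k::field) p = zero4 \<longleftrightarrow> c = 0 \<or> p = zero4"
  by (cases p) (auto simp: zero4_def)

lemma cls_smul: assumes "(c::'k::field) \<noteq> 0" shows "proj_class (smul4 c p) = proj_class p"
proof -
  have "\<exists>d. d \<noteq> 0 \<and> q = smul4 d p" if "q = smul4 e (smul4 c p)" "e \<noteq> 0" for q e
    using that assms by (intro exI[of _ "e*c"]) simp
  moreover have "\<exists>d. d \<noteq> 0 \<and> q = smul4 d (smul4 c p)" if "q = smul4 e p" "e \<noteq> 0" for q e
    using that assms by (intro exI[of _ "e/c"]) simp
  ultimately show ?thesis unfolding proj_class_def by blast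
qed

lemma cls_self: "p \<noteq> zero4 \<Longrightarrow> p \<in> proj_class (p::'k::field pt4)"
  unfolding proj_class_def by (intro CollectI conjI exI[of _ 1]) auto

lemma cls_eq_iff: assumes "a \<noteq> zero4" "b \<noteq> zero4"
  shows "proj_class a = proj_class (b::'k::field pt4) \<longleftrightarrow> (\<exists>c. c \<noteq> 0 \<and> b = smul4 c a)"
proof
  assume "proj_class a = proj_class b"
  then have "b \<in> proj_class a" using cls_self[OF assms(2)] by simp
  then show "\<exists>c. c \<noteq> 0 \<and> b = smul4 c a" unfolding proj_class_def by auto
next
  assume "\<exists>c. c \<noteq> 0 \<and> b = smul4 c a"
  then show "proj_class a = proj_class b" using cls_smul by metis
qed



definition CL :: "'k::field \<Rightarrow> 'k pt4 \<Rightarrow> 'k pt4 \<Rightarrow> bool" where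
  "CL \<alpha> p q \<longleftrightarrow> (\<exists>i\<le>4. \<exists>a b. (a,b) \<in> L \<alpha> i \<and> (\<exists>c. c\<noteq>0 \<and> p = smul4 c a) \<and> (\<exists>d. d\<noteq>0 \<and> q = smul4 d b))"

lemma CLI: "(a,b) \<in> L \<alpha> i \<Longrightarrow> i \<le> 4 \<Longrightarrow> c \<noteq> 0 \<Longrightarrow> d \<noteq> 0 \<Longrightarrow> p = smul4 c a \<Longrightarrow> q = smul4 d b \<Longrightarrow> CL \<alpha> p q"
  unfolding CL_def by blast

lemma L0I: "(P4 1 0 0 0, P4 0 1 0 0) \<in> L \<alpha> 0" "(P4 0 1 0 0, P4 1 0 0 0) \<in> L \<alpha> 0"
  "(P4 0 0 1 0, P4 0 0 0 1) \<in> L \<alpha> 0" "(P4 0 0 0 1, P4 0 0 1 0) \<in> L \<alpha> 0" by simp_all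
lemma L1I: "l1^2 = -2*(1+\<alpha>) \<Longrightarrow> l3^2 = 2 \<Longrightarrow> (P4 l1 1 l3 1, P4 (-l1) 1 l3 1) \<in> L \<alpha> (Suc 0)" by auto
lemma L2I: "l1^2 = -2*(1-\<alpha>) \<Longrightarrow> l3^2 = -2 \<Longrightarrow> (P4 l1 (-1) l3 1, P4 (-l1) (-1) l3 1) \<in> L \<alpha> (Suc (Suc 0))" by auto
lemma L3I: "l1^2 = -2 \<Longrightarrow> l2^2 = -1 \<Longrightarrow> (P4 l1 l2 0 1, P4 (-l1) (-l2) 0 1) \<in> L \<alpha> (Suc (Suc (Suc 0)))" by auto
lemma L4I: "\<alpha>*l2^2 + 2*l2 + \<alpha> = 0 \<Longrightarrow> \<alpha>*l3^2 = -2*l2^2 \<Longrightarrow> (P4 0 l2 l3 1, P4 0 l2 l3 (l2^2)) \<in> L \<alpha> (Suc (Suc (Suc (Suc 0))))" by auto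

lemma classify:
  fixes \<alpha> :: "'k::field"
  assumes two: "(2::'k) \<noteq> 0" and a0: "\<alpha> \<noteq> 0"
    and pn: "P4 p1 p2 p3 p4 \<noteq> zero4" and qn: "P4 q1 q2 q3 q4 \<noteq> zero4"
    and R: "rels \<alpha> (P4 p1 p2 p3 p4) (P4 q1 q2 q3 q4)"
  shows "CL \<alpha> (P4 p1 p2 p3 p4) (P4 q1 q2 q3 q4)"
proof -
  from R have r1: "p3*q1 + p1*q3 = 0" and r2: "p3*q2 - p2*q3 = 0"
    and r3: "2*p2*q2 + \<alpha>*p3*q3 - p1*q1 = 0" and r4: "p4*q1 + p1*q4 = 0"
    and r5: "p2*q2 - p4*q4 = 0" and r6: "p4*q2 + p2*q4 - p3*q3 = 0" by simp_all
  show ?thesis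
  proof (cases "p1 = 0")
    case p1: True
    show ?thesis
    proof (cases "p3 = 0")
      case p3: True
      show ?thesis
      proof (cases "p4 = 0")
        case p4: True
        have p2: "p2 \<noteq> 0" using pn p1 p3 p4 by (simp add: zero4_def)
        have q3: "q3 = 0" using r2 p3 p2 by simp
        have q2: "q2 = 0" using r3 p1 p3 p2 two by simp
        have q4: "q4 = 0" using r6 p3 p4 p2 by simp
        have q1: "q1 \<noteq> 0" using qn q2 q3 q4 by (simp add: zero4_def)
        show ?thesis
          by (rule CLI[OF L0I(2), where c=p2 and d=q1]) (use p1 p2 p3 p4 q1 q2 q3 q4 in simp_all)
      next
        case p4: False
        have q1: "q1 = 0" using r4 p1 p4 by simp
        have p2: "p2 = 0"
        proof (rule ccontr)
          assume p2: "p2 \<noteq> 0"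
          have "q3 = 0" using r2 p3 p2 by simp
          moreover have "q2 = 0" using r3 p1 p3 p2 two by simp
          moreover have "q4 = 0" using r5 p4 \<open>q2 = 0\<close> by simp
          ultimately show False using qn q1 by (simp add: zero4_def)
        qed
        have q4: "q4 = 0" using r5 p2 p4 by simp
        have q2: "q2 = 0" using r6 p2 p3 p4 by simp
        have q3: "q3 \<noteq> 0" using qn q1 q2 q4 by (simp add: zero4_def)
        show ?thesis
          by (rule CLI[OF L0I(4), where c=p4 and d=q3]) (use p1 p2 p3 p4 q1 q2 q3 q4 in simp_all)
      qed
    next
      case p3: False
      have q1: "q1 = 0" using r1 p1 p3 by simp
      show ?thesis
      proof (cases "q3 = 0")
        case q3: True
        have q2: "q2 = 0" using r2 p3 q3 by simp
        have q4: "q4 \<noteq> 0" using qn q1 q2 q3 by (simp add: zero4_def)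
        have p4: "p4 = 0" using r5 q2 q4 by simp
        have p2: "p2 = 0" using r6 q2 q3 q4 by simp
        show ?thesis
          by (rule CLI[OF L0I(3), where c=p3 and d=q4]) (use p1 p2 p3 p4 q1 q2 q3 q4 in simp_all)
      next
        case q3: False
        have h1: "q2 = p2*q3/p3" using r2 p3 by (simp add: field_simps)
        have "2*p2*(p2*q3/p3) + \<alpha>*p3*q3 = 0" using r3 p1 h1 by simp
        then have "(2*p2^2 + \<alpha>*p3^2) * q3 = 0" using p3 by (simp add: field_simps power2_eq_square)
        then have h2: "2*p2^2 + \<alpha>*p3^2 = 0" using q3 by simp
        have p2: "p2 \<noteq> 0" using h2 a0 p3 by auto
        have h3: "p2^2*q3 = p3*p4*q4" using r5 h1 p3 by (simp add: field_simps power2_eq_square)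
        have p4: "p4 \<noteq> 0" using h3 p2 q3 by auto
        have h4: "q4 = p2^2*q3/(p3*p4)" using h3 p3 p4 by (simp add: field_simps)
        have "p4*(p2*q3/p3) + p2*(p2^2*q3/(p3*p4)) - p3*q3 = 0" using r6 h1 h4 by simp
        then have "(p4^2*p2 + p2^3 - p3^2*p4) * q3 = 0" using p3 p4
          by (simp add: field_simps power2_eq_square power3_eq_cube)
        then have h5: "p4^2*p2 + p2^3 = p3^2*p4" using q3 by simp
        have h2': "\<alpha>*p3^2 = -2*p2^2" using h2 by (simp add: eq_neg_iff_add_eq_0 add.commute)
        then have "\<alpha>*(p4^2*p2 + p2^3) = -2*p2^2*p4" using h5 by (metis mult.assoc)
        moreover have "p2 * (\<alpha>*p4^2 + 2*p2*p4 + \<alpha>*p2^2) = \<alpha>*(p4^2*p2 + p2^3) + 2*p2^2*p4"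
          by (simp add: algebra_simps power2_eq_square power3_eq_cube)
        ultimately have "p2 * (\<alpha>*p4^2 + 2*p2*p4 + \<alpha>*p2^2) = 0" by simp
        then have h6: "\<alpha>*p4^2 + 2*p2*p4 + \<alpha>*p2^2 = 0" using p2 by simp
        have m: "(P4 0 (p2/p4) (p3/p4) 1, P4 0 (p2/p4) (p3/p4) ((p2/p4)^2)) \<in> L \<alpha> (Suc (Suc (Suc (Suc 0))))"
        proof (rule L4I)
          show "\<alpha> * (p2/p4)^2 + 2*(p2/p4) + \<alpha> = 0" using h6 p4
            by (simp add: field_simps power2_eq_square)
          show "\<alpha> * (p3/p4)^2 = -2*(p2/p4)^2" using h2' p4
            by (simp add: field_simps power2_eq_square)
        qed
        show ?thesis
          by (rule CLI[OF m, where c=p4 and d="q3*p4/p3"]) (use p1 p2 p3 p4 q1 h1 h4 q3 in \<open>simp_all add: field_simps power2_eq_square\<close>)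
      qed
    qed
  next
    case p1: False
    have h3: "q3 = -p3*q1/p1" using r1 p1 by (simp add: field_simps eq_neg_iff_add_eq_0 add.commute)
    have h4: "q4 = -p4*q1/p1" using r4 p1 by (simp add: field_simps eq_neg_iff_add_eq_0 add.commute)
    show ?thesis
    proof (cases "q1 = 0")
      case q1: True
      have q3: "q3 = 0" and q4: "q4 = 0" using h3 h4 q1 by simp_all
      have q2: "q2 \<noteq> 0" using qn q1 q3 q4 by (simp add: zero4_def)
      have p3: "p3 = 0" using r2 q3 q2 by simp
      have p2: "p2 = 0" using r3 q1 q3 q2 two by simp
      have p4: "p4 = 0" using r6 q3 q4 q2 by simp
      show ?thesis
        by (rule CLI[OF L0I(1), where c=p1 and d=q2]) (use p1 p2 p3 p4 q1 q2 q3 q4 in simp_all)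
    next
      case q1: False
      show ?thesis
      proof (cases "p3 = 0")
        case p3: True
        have q3: "q3 = 0" using h3 p3 by simp
        have e3: "2*p2*q2 = p1*q1" using r3 p3 by simp
        have e5: "p2*q2 = -(p4^2)*q1/p1" using r5 h4 p1 by (simp add: field_simps power2_eq_square eq_neg_iff_add_eq_0)
        have "p1*q1 = -2*p4^2*q1/p1" using e3 e5 by (metis mult.assoc times_divide_eq_right mult_minus_right mult_minus_left)
        then have "(p1^2 + 2*p4^2)*q1 = 0" using p1 by (simp add: field_simps power2_eq_square)
        then have "p1^2 + 2*p4^2 = 0" using q1 by simp
        then have g1: "p1^2 = -2*p4^2" by (simp add: eq_neg_iff_add_eq_0)
        have p4: "p4 \<noteq> 0" using g1 p1 by auto
        have "p4*q2 + p2*(-p4*q1/p1) = 0" using r6 h4 p3 by simp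
        then have q2: "q2 = p2*q1/p1" using p4 p1 by (simp add: field_simps)
        have "p2*(p2*q1/p1) = -(p4^2)*q1/p1" using e5 q2 by simp
        then have "(p2^2 + p4^2)*q1 = 0" using p1 by (simp add: field_simps power2_eq_square)
        then have "p2^2 + p4^2 = 0" using q1 by simp
        then have g2: "p2^2 = -(p4^2)" by (simp add: eq_neg_iff_add_eq_0)
        have m: "(P4 (p1/p4) (p2/p4) 0 1, P4 (-(p1/p4)) (-(p2/p4)) 0 1) \<in> L \<alpha> (Suc (Suc (Suc 0)))"
        proof (rule L3I)
          show "(p1/p4)^2 = -2" using g1 p4 by (simp add: field_simps power2_eq_square)
          show "(p2/p4)^2 = -1" using g2 p4 by (simp add: field_simps power2_eq_square)
        qed
        show ?thesis
          by (rule CLI[OF m, where c=p4 and d="-p4*q1/p1"]) (use p1 p3 p4 q1 q2 q3 h4 in \<open>simp_all add: field_simps\<close>)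
      next
        case p3: False
        have "p3*(p1*q2 + p2*q1) = 0" using r2 h3 p1 by (simp add: field_simps)
        then have "p1*q2 + p2*q1 = 0" using p3 by simp
        then have q2: "q2 = -p2*q1/p1" using p1 by (simp add: field_simps eq_neg_iff_add_eq_0)
        have "p4*(-p2*q1/p1) + p2*(-p4*q1/p1) - p3*(-p3*q1/p1) = 0" using r6 q2 h3 h4 by simp
        then have "(p3^2 - 2*p2*p4)*q1 = 0" using p1 by (simp add: field_simps power2_eq_square)
        then have g1: "p3^2 = 2*p2*p4" using q1 by simp
        have "p2*(-p2*q1/p1) - p4*(-p4*q1/p1) = 0" using r5 q2 h4 by simp
        then have "(p4^2 - p2^2)*q1 = 0" using p1 by (simp add: field_simps power2_eq_square)
        then have g2: "p2^2 = p4^2" using q1 by simp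
        have "2*p2*(-p2*q1/p1) + \<alpha>*p3*(-p3*q1/p1) - p1*q1 = 0" using r3 q2 h3 by simp
        then have "-((p1^2 + 2*p2^2 + \<alpha>*p3^2)*q1)/p1 = 0" using p1 by (simp add: field_simps power2_eq_square)
        then have "(p1^2 + 2*p2^2 + \<alpha>*p3^2)*q1 = 0" using p1 by simp
        then have "p1^2 + (2*p2^2 + \<alpha>*p3^2) = 0" using q1 by (simp add: add.assoc)
        then have "p1^2 = -(2*p2^2 + \<alpha>*p3^2)" by (simp only: eq_neg_iff_add_eq_0)
        then have g3: "p1^2 = -2*p2^2 - \<alpha>*p3^2" by simp
        have p4: "p4 \<noteq> 0" using g1 p3 by auto
        have "(p2 - p4)*(p2 + p4) = 0" using g2 by (simp add: algebra_simps power2_eq_square)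
        then consider "p2 = p4" | "p2 = -p4" by (auto simp: eq_neg_iff_add_eq_0)
        then show ?thesis
        proof cases
          case 1
          have m: "(P4 (p1/p4) 1 (p3/p4) 1, P4 (-(p1/p4)) 1 (p3/p4) 1) \<in> L \<alpha> (Suc 0)"
          proof (rule L1I)
            show "(p1/p4)^2 = -2*(1+\<alpha>)" using g1 g3 p4 1 by (simp add: field_simps power2_eq_square)
            show "(p3/p4)^2 = 2" using g1 p4 1 by (simp add: field_simps power2_eq_square)
          qed
          show ?thesis
            by (rule CLI[OF m, where c=p4 and d="-p4*q1/p1"]) (use 1 p1 p4 q1 q2 h3 h4 in \<open>simp_all add: field_simps\<close>)
        next
          case 2
          have m: "(P4 (p1/p4) (-1) (p3/p4) 1, P4 (-(p1/p4)) (-1) (p3/p4) 1) \<in> L \<alpha> (Suc (Suc 0))"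
          proof (rule L2I)
            show "(p1/p4)^2 = -2*(1-\<alpha>)" using g1 g3 p4 2 by (simp add: field_simps power2_eq_square)
            show "(p3/p4)^2 = -2" using g1 p4 2 by (simp add: field_simps power2_eq_square)
          qed
          show ?thesis
            by (rule CLI[OF m, where c=p4 and d="-p4*q1/p1"]) (use 2 p1 p4 q1 q2 h3 h4 in \<open>simp_all add: field_simps\<close>)
        qed
      qed
    qed
  qed
qed



lemma le4_cases: "(i::nat) \<le> 4 \<Longrightarrow> i = 0 \<or> i = Suc 0 \<or> i = Suc (Suc 0) \<or> i = Suc (Suc (Suc 0)) \<or> i = Suc (Suc (Suc (Suc 0)))"
  by arith

fun sig :: "'k::field pt4 \<Rightarrow> 'k pt4" where
  "sig (P4 p1 p2 p3 p4) = (if p1 \<noteq> 0 then (if p2 = 0 \<and> p3 = 0 \<and> p4 = 0 then P4 0 1 0 0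
      else P4 p1 (if p3 = 0 then p2 else -p2) (-p3) (-p4))
    else if p3 = 0 then (if p4 = 0 then P4 1 0 0 0 else P4 0 0 1 0)
    else if p2 = 0 \<and> p4 = 0 then P4 0 0 0 1 else P4 0 (p2*p4) (p3*p4) (p2^2))"

lemma sig_smul: assumes "(c::'k::field) \<noteq> 0" shows "\<exists>e. e \<noteq> 0 \<and> sig (smul4 c p) = smul4 e (sig p)"
proof (cases p)
  case (P4 p1 p2 p3 p4)
  show ?thesis
  proof (cases "p1 = 0")
    case p1: False
    show ?thesis
    proof (cases "p2 = 0 \<and> p3 = 0 \<and> p4 = 0")
      case True
      then show ?thesis using assms P4 p1 by (intro exI[of _ 1]) auto
    next
      case False
      then show ?thesis using assms P4 p1 by (intro exI[of _ c]) auto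
    qed
  next
    case p1: True
    show ?thesis
    proof (cases "p3 = 0 \<or> (p2 = 0 \<and> p4 = 0)")
      case True
      then show ?thesis using assms P4 p1 by (intro exI[of _ 1]) auto
    next
      case False
      then show ?thesis using assms P4 p1 by (intro exI[of _ "c^2"]) (auto simp: power2_eq_square)
    qed
  qed
qed

context
  fixes \<alpha> :: "'k::field"
  assumes two: "(2::'k) \<noteq> 0" and a0: "\<alpha> \<noteq> 0" and ap: "1 + \<alpha> \<noteq> 0" and am: "1 - \<alpha> \<noteq> 0"
begin

lemma sq_nz: "x^2 = c \<Longrightarrow> c \<noteq> 0 \<Longrightarrow> (x::'k) \<noteq> 0" by auto

lemma one_neq_m1: "(1::'k) \<noteq> -1"
proof
  assume h: "(1::'k) = -1"
  have "1 + 1 = 1 + (-1::'k)" using arg_cong[OF h, of "\<lambda>x. 1 + x"] .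
  then have "(2::'k) = 0" by (simp only: one_add_one add.right_inverse)
  with two show False by simp
qed

lemma c1: "-2*(1+\<alpha>) \<noteq> 0"
proof
  assume "-2*(1+\<alpha>) = 0" then have "2 = (0::'k) \<or> 1+\<alpha> = 0" by (simp only: mult_eq_0_iff neg_equal_0_iff_equal)
  with two ap show False by blast
qed
lemma c2: "-2*(1-\<alpha>) \<noteq> 0"
proof
  assume "-2*(1-\<alpha>) = 0" then have "2 = (0::'k) \<or> 1-\<alpha> = 0" by (simp only: mult_eq_0_iff neg_equal_0_iff_equal)
  with two am show False by blast
qed
lemma c3: "(-2::'k) \<noteq> 0" using two by simp
lemma c4: "(-1::'k) \<noteq> 0" by simp

lemma L4_facts: assumes "\<alpha>*l2^2 + 2*l2 + \<alpha> = 0" "\<alpha>*l3^2 = -2*l2^2"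
  shows "l2 \<noteq> 0" "l3 \<noteq> 0" "l3^2 = l2 + l2^3" "l2^2 \<noteq> 1"
proof -
  show l2: "l2 \<noteq> 0" using assms(1) a0 by auto
  show "l3 \<noteq> 0" using assms(2) l2 two by auto
  have "\<alpha>*(l2 + l2^3) = l2*(\<alpha>*l2^2 + \<alpha>)" by (simp add: algebra_simps power2_eq_square power3_eq_cube)
  also have "\<alpha>*l2^2 + \<alpha> = -2*l2" using assms(1) by (simp add: eq_neg_iff_add_eq_0 algebra_simps)
  finally have "\<alpha>*(l2 + l2^3) = \<alpha>*l3^2" using assms(2) by (simp add: power2_eq_square)
  then show "l3^2 = l2 + l2^3" using a0 by simp
  show "l2^2 \<noteq> 1"
  proof
    assume h: "l2^2 = 1"
    have "2*(\<alpha> + l2) = 0" using assms(1) h by algebra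
    then have "\<alpha> + l2 = 0" using two mult_eq_0_iff by blast
    then have "l2 = -\<alpha>" by (simp add: eq_neg_iff_add_eq_0 add.commute)
    then have "\<alpha>^2 = 1" using h by simp
    then have "(1 - \<alpha>)*(1 + \<alpha>) = 0" by algebra
    then show False using ap am by simp
  qed
qed

lemma Lsound: assumes "(a,b) \<in> L \<alpha> i" "i \<le> 4"
  shows "a \<noteq> zero4 \<and> b \<noteq> zero4 \<and> rels \<alpha> a b"
  using le4_cases[OF assms(2)]
proof (elim disjE)
  assume "i = 0" then show ?thesis using assms(1) by (auto simp: zero4_def)
next
  assume "i = Suc 0"
  then obtain l1 l3 where ab: "a = P4 l1 1 l3 1" "b = P4 (-l1) 1 l3 1"
    and h: "l1^2 = -2*(1+\<alpha>)" "l3^2 = 2" using assms(1) by auto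
  have "rels \<alpha> a b" unfolding ab rels.simps using h
    apply (intro conjI) apply (simp_all add: algebra_simps) apply algebra+ done
  then show ?thesis using ab by (simp add: zero4_def)
next
  assume "i = Suc (Suc 0)"
  then obtain l1 l3 where ab: "a = P4 l1 (-1) l3 1" "b = P4 (-l1) (-1) l3 1"
    and h: "l1^2 = -2*(1-\<alpha>)" "l3^2 = -2" using assms(1) by auto
  have "rels \<alpha> a b" unfolding ab rels.simps using h
    apply (intro conjI) apply (simp_all add: algebra_simps) apply algebra+ done
  then show ?thesis using ab by (simp add: zero4_def)
next
  assume "i = Suc (Suc (Suc 0))"
  then obtain l1 l2 where ab: "a = P4 l1 l2 0 1" "b = P4 (-l1) (-l2) 0 1"
    and h: "l1^2 = -2" "l2^2 = -1" using assms(1) by auto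
  have "rels \<alpha> a b" unfolding ab rels.simps using h
    apply (intro conjI) apply (simp_all add: algebra_simps) apply algebra+ done
  then show ?thesis using ab by (simp add: zero4_def)
next
  assume i: "i = Suc (Suc (Suc (Suc 0)))"
  then obtain l2 l3 where ab: "a = P4 0 l2 l3 1" "b = P4 0 l2 l3 (l2^2)"
    and h: "\<alpha>*l2^2 + 2*l2 + \<alpha> = 0" "\<alpha>*l3^2 = -2*l2^2" using assms(1) by auto
  note f = L4_facts[OF h]
  have "rels \<alpha> a b" unfolding ab rels.simps using h f(3)
    apply (intro conjI) apply (simp_all add: algebra_simps) apply algebra+ done
  then show ?thesis using ab f by (simp add: zero4_def)
qed

lemma Lsig: assumes "(a,b) \<in> L \<alpha> i" "i \<le> 4"
  shows "\<exists>e. e \<noteq> 0 \<and> b = smul4 e (sig a)"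
  using le4_cases[OF assms(2)]
proof (elim disjE)
  assume "i = 0" then show ?thesis using assms(1) by (auto intro: exI[of _ 1])
next
  assume "i = Suc 0"
  then obtain l1 l3 where ab: "a = P4 l1 1 l3 1" "b = P4 (-l1) 1 l3 1"
    and h: "l1^2 = -2*(1+\<alpha>)" "l3^2 = 2" using assms(1) by auto
  have "l1 \<noteq> 0" "l3 \<noteq> 0" using sq_nz[OF h(1) c1] sq_nz[OF h(2)] two by auto
  then show ?thesis using ab by (intro exI[of _ "-1"]) auto
next
  assume "i = Suc (Suc 0)"
  then obtain l1 l3 where ab: "a = P4 l1 (-1) l3 1" "b = P4 (-l1) (-1) l3 1"
    and h: "l1^2 = -2*(1-\<alpha>)" "l3^2 = -2" using assms(1) by auto
  have "l1 \<noteq> 0" "l3 \<noteq> 0" using sq_nz[OF h(1) c2] sq_nz[OF h(2) c3] by auto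
  then show ?thesis using ab by (intro exI[of _ "-1"]) auto
next
  assume "i = Suc (Suc (Suc 0))"
  then obtain l1 l2 where ab: "a = P4 l1 l2 0 1" "b = P4 (-l1) (-l2) 0 1"
    and h: "l1^2 = -2" "l2^2 = -1" using assms(1) by auto
  have "l1 \<noteq> 0" using sq_nz[OF h(1) c3] by auto
  then show ?thesis using ab by (intro exI[of _ "-1"]) auto
next
  assume i: "i = Suc (Suc (Suc (Suc 0)))"
  then obtain l2 l3 where ab: "a = P4 0 l2 l3 1" "b = P4 0 l2 l3 (l2^2)"
    and h: "\<alpha>*l2^2 + 2*l2 + \<alpha> = 0" "\<alpha>*l3^2 = -2*l2^2" using assms(1) by auto
  note f = L4_facts[OF h]
  show ?thesis using ab f by (intro exI[of _ 1]) auto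
qed

lemma Lswap: assumes "(a,b) \<in> L \<alpha> i" "i \<le> 4"
  shows "\<exists>a' b'. (a',b') \<in> L \<alpha> i \<and> proj_class a' = proj_class b \<and> proj_class b' = proj_class a"
  using le4_cases[OF assms(2)]
proof (elim disjE)
  assume "i = 0" then show ?thesis using assms(1) by auto
next
  assume "i = Suc 0" then show ?thesis using assms(1) by force
next
  assume "i = Suc (Suc 0)" then show ?thesis using assms(1) by force
next
  assume "i = Suc (Suc (Suc 0))" then show ?thesis using assms(1) by force
next
  assume i: "i = Suc (Suc (Suc (Suc 0)))"
  then obtain l2 l3 where ab: "a = P4 0 l2 l3 1" "b = P4 0 l2 l3 (l2^2)"
    and h: "\<alpha>*l2^2 + 2*l2 + \<alpha> = 0" "\<alpha>*l3^2 = -2*l2^2" using assms(1) by auto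
  note f = L4_facts[OF h]
  have m: "(P4 0 (1/l2) (l3/l2^2) 1, P4 0 (1/l2) (l3/l2^2) ((1/l2)^2)) \<in> L \<alpha> i"
    unfolding i
  proof (rule L4I)
    have "\<alpha> * (1/l2)^2 + 2*(1/l2) + \<alpha> = (\<alpha>*l2^2 + 2*l2 + \<alpha>) / l2^2"
      using f(1) by (simp add: field_simps power2_eq_square)
    then show "\<alpha> * (1/l2)^2 + 2*(1/l2) + \<alpha> = 0" using h(1) by simp
    have "\<alpha> * (l3/l2^2)^2 = (\<alpha>*l3^2) / (l2^2)^2" by (simp add: power_divide power2_eq_square)
    also have "\<dots> = -2*(1/l2)^2" using h(2) f(1) by (simp add: field_simps power2_eq_square)
    finally show "\<alpha> * (l3/l2^2)^2 = -2*(1/l2)^2" .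
  qed
  have e1: "b = smul4 (l2^2) (P4 0 (1/l2) (l3/l2^2) 1)" using ab f(1) by (simp add: power2_eq_square)
  have e2: "a = smul4 (l2^2) (P4 0 (1/l2) (l3/l2^2) ((1/l2)^2))" using ab f(1)
    by (simp add: power2_eq_square)
  have nz: "l2^2 \<noteq> 0" using f(1) by simp
  have "proj_class (P4 0 (1/l2) (l3/l2^2) 1) = proj_class b"
    by (subst e1) (rule cls_smul[OF nz, symmetric])
  moreover have "proj_class (P4 0 (1/l2) (l3/l2^2) ((1/l2)^2)) = proj_class a"
    by (subst e2) (rule cls_smul[OF nz, symmetric])
  ultimately show ?thesis using m by blast
qed

lemma Lneq: assumes "(a,b) \<in> L \<alpha> i" "i \<le> 4"
  shows "proj_class a \<noteq> proj_class b"
proof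
  assume eq: "proj_class a = proj_class b"
  have nz: "a \<noteq> zero4" "b \<noteq> zero4" using Lsound[OF assms] by auto
  then obtain c where c: "c \<noteq> 0" "b = smul4 c a" using eq cls_eq_iff by blast
  show False
  using le4_cases[OF assms(2)]
  proof (elim disjE)
    assume "i = 0"
    have "(a, smul4 c a) \<in> L \<alpha> 0" using assms(1) c(2) \<open>i = 0\<close> by simp
    then show ?thesis using c(1) by auto
  next
    assume "i = Suc 0"
    then obtain l1 l3 where ab: "a = P4 l1 1 l3 1" "b = P4 (-l1) 1 l3 1"
      and h: "l1^2 = -2*(1+\<alpha>)" "l3^2 = 2" using assms(1) by auto
    have "l1 \<noteq> 0" using sq_nz[OF h(1) c1] by auto
    then show False using ab c two by (auto simp: eq_neg_iff_add_eq_0 mult_2[symmetric])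
  next
    assume "i = Suc (Suc 0)"
    then obtain l1 l3 where ab: "a = P4 l1 (-1) l3 1" "b = P4 (-l1) (-1) l3 1"
      and h: "l1^2 = -2*(1-\<alpha>)" "l3^2 = -2" using assms(1) by auto
    have "l1 \<noteq> 0" using sq_nz[OF h(1) c2] by auto
    then show False using ab c two by (auto simp: eq_neg_iff_add_eq_0 mult_2[symmetric])
  next
    assume "i = Suc (Suc (Suc 0))"
    then obtain l1 l2 where ab: "a = P4 l1 l2 0 1" "b = P4 (-l1) (-l2) 0 1"
      and h: "l1^2 = -2" "l2^2 = -1" using assms(1) by auto
    have "l1 \<noteq> 0" using sq_nz[OF h(1) c3] by auto
    then show False using ab c two by (auto simp: eq_neg_iff_add_eq_0 mult_2[symmetric])
  next
    assume i: "i = Suc (Suc (Suc (Suc 0)))"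
    then obtain l2 l3 where ab: "a = P4 0 l2 l3 1" "b = P4 0 l2 l3 (l2^2)"
      and h: "\<alpha>*l2^2 + 2*l2 + \<alpha> = 0" "\<alpha>*l3^2 = -2*l2^2" using assms(1) by auto
    note f = L4_facts[OF h]
    show False using ab c f by auto
  qed
qed

end


context
  fixes \<alpha> :: "'k::field"
  assumes two: "(2::'k) \<noteq> 0" and a0: "\<alpha> \<noteq> 0" and ap: "1 + \<alpha> \<noteq> 0" and am: "1 - \<alpha> \<noteq> 0"
begin

lemmas Lsound' = Lsound[OF two a0 ap am]
lemmas Lsig' = Lsig[OF two a0 ap am]
lemmas Lswap' = Lswap[OF two a0 ap am]
lemmas Lneq' = Lneq[OF two a0 ap am]

lemma key: assumes "p \<noteq> zero4" "q \<noteq> zero4" "rels \<alpha> p q"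
  shows "sig p \<noteq> zero4 \<and> proj_class q = proj_class (sig p)"
proof -
  obtain p1 p2 p3 p4 where pp: "p = P4 p1 p2 p3 p4" by (cases p)
  obtain q1 q2 q3 q4 where qq: "q = P4 q1 q2 q3 q4" by (cases q)
  have "CL \<alpha> p q" using classify[OF two a0] assms unfolding pp qq by blast
  then obtain i a b c d where i: "i \<le> 4" and ab: "(a,b) \<in> L \<alpha> i" and c: "c \<noteq> 0" "p = smul4 c a"
    and d: "d \<noteq> 0" "q = smul4 d b" unfolding CL_def by blast
  obtain e where e: "e \<noteq> 0" "b = smul4 e (sig a)" using Lsig'[OF ab i] by blast
  obtain e' where e': "e' \<noteq> 0" "sig p = smul4 e' (sig a)" using sig_smul[OF c(1), of a] c(2) by blast
  have bnz: "b \<noteq> zero4" using Lsound'[OF ab i] by blast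
  have san: "sig a \<noteq> zero4" using bnz e(2) smul4_zero_iff by metis
  have "sig p \<noteq> zero4" using e' san smul4_zero_iff by metis
  moreover have "proj_class q = proj_class (sig a)" using d e cls_smul by (metis smul4_smul4 mult_eq_0_iff)
  moreover have "proj_class (sig p) = proj_class (sig a)" using e' cls_smul by metis
  ultimately show ?thesis by simp
qed

lemma Gamma_eq: "Gamma \<alpha> = (\<Union>i\<le>4. (\<lambda>(a, b). (proj_class a, proj_class b)) ` L \<alpha> i)"
proof
  show "Gamma \<alpha> \<subseteq> (\<Union>i\<le>4. (\<lambda>(a, b). (proj_class a, proj_class b)) ` L \<alpha> i)"
  proof
    fix x assume "x \<in> Gamma \<alpha>"
    then obtain p q where x: "x = (proj_class p, proj_class q)" and pq: "p \<noteq> zero4" "q \<noteq> zero4" "rels \<alpha> p q"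
      unfolding Gamma_def by blast
    obtain p1 p2 p3 p4 where pp: "p = P4 p1 p2 p3 p4" by (cases p)
    obtain q1 q2 q3 q4 where qq: "q = P4 q1 q2 q3 q4" by (cases q)
    have "CL \<alpha> p q" using classify[OF two a0] pq unfolding pp qq by blast
    then obtain i a b c d where i: "i \<le> 4" and ab: "(a,b) \<in> L \<alpha> i" and c: "c \<noteq> 0" "p = smul4 c a"
      and d: "d \<noteq> 0" "q = smul4 d b" unfolding CL_def by blast
    have "x = (proj_class a, proj_class b)" using x c d cls_smul by metis
    then show "x \<in> (\<Union>i\<le>4. (\<lambda>(a, b). (proj_class a, proj_class b)) ` L \<alpha> i)"
      using i ab by (auto intro!: image_eqI[of _ _ "(a,b)"])
  qed
next
  show "(\<Union>i\<le>4. (\<lambda>(a, b). (proj_class a, proj_class b)) ` L \<alpha> i) \<subseteq> Gamma \<alpha>"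
  proof
    fix x assume "x \<in> (\<Union>i\<le>4. (\<lambda>(a, b). (proj_class a, proj_class b)) ` L \<alpha> i)"
    then obtain i a b where i: "i \<le> 4" and ab: "(a,b) \<in> L \<alpha> i" and x: "x = (proj_class a, proj_class b)"
      by auto
    show "x \<in> Gamma \<alpha>" using Lsound'[OF ab i] x unfolding Gamma_def by blast
  qed
qed

lemma Lpair: "(a,b) \<in> L \<alpha> i \<Longrightarrow> i \<le> 4 \<Longrightarrow> (proj_class a, proj_class b) \<in> Gamma \<alpha>"
  unfolding Gamma_eq by auto

lemma uniq: assumes "(P,Q) \<in> Gamma \<alpha>" "(P,Q') \<in> Gamma \<alpha>" shows "Q = Q'"
proof -
  obtain p q where x: "P = proj_class p" "Q = proj_class q" and pq: "p \<noteq> zero4" "q \<noteq> zero4" "rels \<alpha> p q"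
    using assms(1) unfolding Gamma_def by blast
  obtain p' q' where x': "P = proj_class p'" "Q' = proj_class q'" and pq': "p' \<noteq> zero4" "q' \<noteq> zero4" "rels \<alpha> p' q'"
    using assms(2) unfolding Gamma_def by blast
  have "proj_class p = proj_class p'" using x x' by simp
  then obtain c where c: "c \<noteq> 0" "p' = smul4 c p" using cls_eq_iff[OF pq(1) pq'(1)] by blast
  obtain e where e: "e \<noteq> 0" "sig p' = smul4 e (sig p)" using sig_smul[OF c(1), of p] c by blast
  have "Q = proj_class (sig p)" using key[OF pq] x by simp
  moreover have "Q' = proj_class (sig p')" using key[OF pq'] x' by simp
  moreover have "proj_class (sig p') = proj_class (sig p)" using e(2) cls_smul[OF e(1)] by simp
  ultimately show ?thesis by simp
qed

lemma sigma_eq: assumes "(P,Q) \<in> Gamma \<alpha>" shows "sigma \<alpha> P = Q"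
  unfolding sigma_def
proof (rule the_equality[where P="\<lambda>Q. (P, Q) \<in> Gamma \<alpha>", OF assms])
  fix y assume "(P, y) \<in> Gamma \<alpha>" then show "y = Q" using uniq[OF _ assms] by blast
qed

lemma sig_ab: assumes "(a,b) \<in> L \<alpha> i" "i \<le> 4"
  shows "sigma \<alpha> (proj_class a) = proj_class b" "sigma \<alpha> (proj_class b) = proj_class a"
    "(proj_class b, proj_class a) \<in> Gamma \<alpha>"
proof -
  show "sigma \<alpha> (proj_class a) = proj_class b" using sigma_eq Lpair[OF assms] by blast
  obtain a' b' where "(a',b') \<in> L \<alpha> i" "proj_class a' = proj_class b" "proj_class b' = proj_class a"
    using Lswap'[OF assms] by blast
  then show g: "(proj_class b, proj_class a) \<in> Gamma \<alpha>" using Lpair assms(2) by metis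
  show "sigma \<alpha> (proj_class b) = proj_class a" using sigma_eq g by blast
qed

lemma Zinv: assumes "i \<le> 4" shows "sigma \<alpha> ` Z \<alpha> i = Z \<alpha> i"
proof
  show "sigma \<alpha> ` Z \<alpha> i \<subseteq> Z \<alpha> i"
  proof
    fix x assume "x \<in> sigma \<alpha> ` Z \<alpha> i"
    then obtain a b where ab: "(a,b) \<in> L \<alpha> i" and x: "x = sigma \<alpha> (proj_class a)" unfolding Z_def by auto
    obtain a' b' where ab': "(a',b') \<in> L \<alpha> i" "proj_class a' = proj_class b"
      using Lswap'[OF ab assms] by blast
    have "x = proj_class a'" using x sig_ab[OF ab assms] ab' by simp
    then show "x \<in> Z \<alpha> i" unfolding Z_def using ab' by (auto intro!: image_eqI[of _ _ "(a',b')"])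
  qed
next
  show "Z \<alpha> i \<subseteq> sigma \<alpha> ` Z \<alpha> i"
  proof
    fix x assume "x \<in> Z \<alpha> i"
    then obtain a b where ab: "(a,b) \<in> L \<alpha> i" and x: "x = proj_class a" unfolding Z_def by auto
    obtain a' b' where ab': "(a',b') \<in> L \<alpha> i" "proj_class b' = proj_class a"
      using Lswap'[OF ab assms] by blast
    have "x = sigma \<alpha> (proj_class a')" using x sig_ab[OF ab'(1) assms] ab' by simp
    moreover have "proj_class a' \<in> Z \<alpha> i" unfolding Z_def using ab' by (auto intro!: image_eqI[of _ _ "(a',b')"])
    ultimately show "x \<in> sigma \<alpha> ` Z \<alpha> i" by blast
  qed
qed

lemma frakp_eq: "frakp \<alpha> = (\<Union>i\<le>4. Z \<alpha> i)"
  unfolding frakp_def Gamma_eq Z_def image_UN image_image by (simp add: case_prod_beta')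

lemma frakp_props: assumes "P \<in> frakp \<alpha>"
  shows "sigma \<alpha> (sigma \<alpha> P) = P" "sigma \<alpha> P \<noteq> P" "sigma \<alpha> P \<in> frakp \<alpha>"
proof -
  obtain i a b where i: "i \<le> 4" and ab: "(a,b) \<in> L \<alpha> i" and P: "P = proj_class a"
    using assms unfolding frakp_eq Z_def by auto
  note s = sig_ab[OF ab i]
  show "sigma \<alpha> (sigma \<alpha> P) = P" using s P by simp
  show "sigma \<alpha> P \<noteq> P" using s P Lneq'[OF ab i] by simp
  show "sigma \<alpha> P \<in> frakp \<alpha>" using s P unfolding frakp_def by force
qed

lemma orbit: assumes "P \<in> frakp \<alpha>" shows "sigma_orbit \<alpha> P = {P, sigma \<alpha> P}"
proof -
  have it: "(sigma \<alpha> ^^ n) P = (if even n then P else sigma \<alpha> P)" for n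
    by (induction n) (auto simp: frakp_props[OF assms])
  show ?thesis unfolding sigma_orbit_def
  proof (intro equalityI subsetI)
    fix x assume "x \<in> {(sigma \<alpha> ^^ n) P |n. True}"
    then obtain n where "x = (sigma \<alpha> ^^ n) P" by blast
    then show "x \<in> {P, sigma \<alpha> P}" using it[of n] by (cases "even n") simp_all
  next
    fix x assume x: "x \<in> {P, sigma \<alpha> P}"
    have "(sigma \<alpha> ^^ 0) P = P" "(sigma \<alpha> ^^ 1) P = sigma \<alpha> P" by simp_all
    then show "x \<in> {(sigma \<alpha> ^^ n) P |n. True}" using x by blast
  qed
qed

end


lemma card_sq: assumes ac: "alg_closed TYPE('k::field)" and two: "(2::'k) \<noteq> 0" and A: "(A::'k) \<noteq> 0"
  shows "card {x::'k. x^2 = A} = 2"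
proof -
  have "degree [:-A, 0, 1:] \<ge> 1" by simp
  then obtain r where "poly [:-A, 0, 1:] r = 0" using ac unfolding alg_closed_def by blast
  then have r: "r^2 = A" by (simp add: power2_eq_square)
  have set: "{x::'k. x^2 = A} = {r, -r}"
  proof (intro equalityI subsetI)
    fix x assume "x \<in> {x::'k. x^2 = A}"
    then have "x^2 = r^2" using r by simp
    then show "x \<in> {r, -r}" unfolding power2_eq_iff by blast
  next
    fix x assume "x \<in> {r, -r}"
    then show "x \<in> {x::'k. x^2 = A}" using r by auto
  qed
  have "r \<noteq> -r"
  proof
    assume "r = -r" then have "r + r = 0" by (simp only: eq_neg_iff_add_eq_0)
    then have "2*r = 0" by (simp only: mult_2)
    then have "r = 0" using two mult_eq_0_iff by blast
    then show False using r A by simp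
  qed
  then show ?thesis unfolding set by simp
qed

lemma card_quad: assumes ac: "alg_closed TYPE('k::field)" and two: "(2::'k) \<noteq> 0" and a0: "(\<alpha>::'k) \<noteq> 0"
  and ap: "1 + \<alpha> \<noteq> 0" and am: "1 - \<alpha> \<noteq> 0"
  shows "card {x::'k. \<alpha>*x^2 + 2*x + \<alpha> = 0} = 2"
proof -
  have "degree [:\<alpha>, 2, \<alpha>:] \<ge> 1" using a0 by simp
  then obtain s where "poly [:\<alpha>, 2, \<alpha>:] s = 0" using ac unfolding alg_closed_def by blast
  then have s: "\<alpha>*s^2 + 2*s + \<alpha> = 0" by (simp add: power2_eq_square algebra_simps)
  have s0: "s \<noteq> 0" using s a0 by auto
  have other: "x = 1/s" if x: "\<alpha>*x^2 + 2*x + \<alpha> = 0" "x \<noteq> s" for x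
  proof -
    have "(x - s) * (\<alpha>*(x+s) + 2) = 0" using x(1) s by algebra
    then have k: "\<alpha>*(x+s) + 2 = 0" using x(2) by simp
    have "\<alpha>*(x*s - 1) = 0" using k s by algebra
    then have "x*s = 1" using a0 by simp
    then show ?thesis using s0 by (simp add: field_simps)
  qed
  have inv: "\<alpha>*(1/s)^2 + 2*(1/s) + \<alpha> = 0"
  proof -
    have "\<alpha>*(1/s)^2 + 2*(1/s) + \<alpha> = (\<alpha>*s^2 + 2*s + \<alpha>)/s^2" using s0
      by (simp add: field_simps power2_eq_square)
    then show ?thesis using s by simp
  qed
  have neq: "s \<noteq> 1/s"
  proof
    assume h: "s = 1/s"
    have "s*s = (1/s)*s" using arg_cong[OF h, of "\<lambda>x. x*s"] .
    then have ss: "s*s = 1" using s0 by simp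
    have "2*(\<alpha> + s) = 0" using s ss by algebra
    then have "\<alpha> + s = 0" using two mult_eq_0_iff by blast
    then have "s = -\<alpha>" by (simp add: eq_neg_iff_add_eq_0 add.commute)
    then have "(1 - \<alpha>)*(1 + \<alpha>) = 0" using ss by algebra
    then show False using ap am by simp
  qed
  have set: "{x::'k. \<alpha>*x^2 + 2*x + \<alpha> = 0} = {s, 1/s}" using s inv other by auto
  show ?thesis unfolding set using neq by simp
qed

context
  fixes \<alpha> :: "'k::field"
  assumes ac: "alg_closed TYPE('k)"
    and two: "(2::'k) \<noteq> 0" and a0: "\<alpha> \<noteq> 0" and ap: "1 + \<alpha> \<noteq> 0" and am: "1 - \<alpha> \<noteq> 0"
begin

lemma Lshape: assumes "(a,b) \<in> L \<alpha> i" "i \<le> 4"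
  shows "(i = 0 \<and> (a = P4 1 0 0 0 \<or> a = P4 0 1 0 0 \<or> a = P4 0 0 1 0 \<or> a = P4 0 0 0 1))
    \<or> (i = Suc 0 \<and> (\<exists>x y. a = P4 x 1 y 1 \<and> x \<noteq> 0 \<and> y \<noteq> 0))
    \<or> (i = Suc (Suc 0) \<and> (\<exists>x y. a = P4 x (-1) y 1 \<and> x \<noteq> 0 \<and> y \<noteq> 0))
    \<or> (i = Suc (Suc (Suc 0)) \<and> (\<exists>x y. a = P4 x y 0 1 \<and> x \<noteq> 0 \<and> y \<noteq> 0))
    \<or> (i = Suc (Suc (Suc (Suc 0))) \<and> (\<exists>x y. a = P4 0 x y 1 \<and> x \<noteq> 0 \<and> y \<noteq> 0))"
  using le4_cases[OF assms(2)]
proof (elim disjE)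
  assume "i = 0" then show ?thesis using assms(1) by auto
next
  assume i: "i = Suc 0"
  then obtain l1 l3 where ab: "a = P4 l1 1 l3 1" and h: "l1^2 = -2*(1+\<alpha>)" "l3^2 = 2" using assms(1) by auto
  have "l1 \<noteq> 0" "l3 \<noteq> 0" using sq_nz[OF two a0 ap am h(1) c1[OF two a0 ap am]] sq_nz[OF two a0 ap am h(2)] two by auto
  then show ?thesis using ab i by blast
next
  assume i: "i = Suc (Suc 0)"
  then obtain l1 l3 where ab: "a = P4 l1 (-1) l3 1" and h: "l1^2 = -2*(1-\<alpha>)" "l3^2 = -2" using assms(1) by auto
  have "l1 \<noteq> 0" "l3 \<noteq> 0" using sq_nz[OF two a0 ap am h(1) c2[OF two a0 ap am]] sq_nz[OF two a0 ap am h(2) c3[OF two a0 ap am]] by auto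
  then show ?thesis using ab i by blast
next
  assume i: "i = Suc (Suc (Suc 0))"
  then obtain l1 l2 where ab: "a = P4 l1 l2 0 1" and h: "l1^2 = -2" "l2^2 = -1" using assms(1) by auto
  have "l1 \<noteq> 0" "l2 \<noteq> 0" using sq_nz[OF two a0 ap am h(1) c3[OF two a0 ap am]] sq_nz[OF two a0 ap am h(2)] by auto
  then show ?thesis using ab i by blast
next
  assume i: "i = Suc (Suc (Suc (Suc 0)))"
  then obtain l2 l3 where ab: "a = P4 0 l2 l3 1"
    and h: "\<alpha>*l2^2 + 2*l2 + \<alpha> = 0" "\<alpha>*l3^2 = -2*l2^2" using assms(1) by auto
  note f = L4_facts[OF two a0 ap am h]
  show ?thesis using ab f i by blast
qed

lemma Lclass: assumes "(a,b) \<in> L \<alpha> i" "i \<le> 4" "(a',b') \<in> L \<alpha> j" "j \<le> 4"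
  "a' = smul4 c a" "c \<noteq> 0"
  shows "i = j \<and> a' = a"
  using Lshape[OF assms(1,2)] Lshape[OF assms(3,4)] assms(5,6) one_neq_m1[OF two a0 ap am]
  by (elim disjE) auto

end


context
  fixes \<alpha> :: "'k::field"
  assumes ac: "alg_closed TYPE('k)"
    and two: "(2::'k) \<noteq> 0" and a0: "\<alpha> \<noteq> 0" and ap: "1 + \<alpha> \<noteq> 0" and am: "1 - \<alpha> \<noteq> 0"
begin

lemmas Lclass' = Lclass[OF ac two a0 ap am]
lemmas Lsound'' = Lsound[OF two a0 ap am]

lemma Z_img: "Z \<alpha> i = proj_class ` fst ` L \<alpha> i"
  unfolding Z_def image_image by (simp add: case_prod_beta')

lemma cardZ_fst: assumes "i \<le> 4" shows "card (Z \<alpha> i) = card (fst ` L \<alpha> i)"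
  unfolding Z_img
proof (rule card_image, rule inj_onI)
  fix x y assume x: "x \<in> fst ` L \<alpha> i" and y: "y \<in> fst ` L \<alpha> i" and eq: "proj_class x = proj_class y"
  obtain bx where bx: "(x,bx) \<in> L \<alpha> i" using x by force
  obtain by' where by': "(y,by') \<in> L \<alpha> i" using y by force
  have "x \<noteq> zero4" "y \<noteq> zero4" using Lsound''[OF bx assms] Lsound''[OF by' assms] by auto
  then obtain c where "c \<noteq> 0" "y = smul4 c x" using eq cls_eq_iff by metis
  then show "x = y" using Lclass'[OF bx assms by' assms] by metis
qed

lemma sq2: "c \<noteq> 0 \<Longrightarrow> card {x::'k. x^2 = c} = 2" using card_sq[OF ac two] by blast

lemma card_fst: assumes "i \<le> 4" shows "card (fst ` L \<alpha> i) = 4"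
  using le4_cases[OF assms]
proof (elim disjE)
  assume "i = 0" then show ?thesis by simp
next
  assume i: "i = Suc 0"
  have eq: "fst ` L \<alpha> i = (\<lambda>(x,y). P4 x 1 y 1) ` ({x::'k. x^2 = -2*(1+\<alpha>)} \<times> {y::'k. y^2 = 2})"
    unfolding i by force
  have inj: "inj (\<lambda>(x::'k,y::'k). P4 x 1 y 1)" by (auto simp: inj_def)
  have k1: "card {x::'k. x^2 = -2*(1+\<alpha>)} = 2" by (rule sq2[OF c1[OF two a0 ap am]])
  have k2: "card {y::'k. y^2 = 2} = 2" by (rule sq2[OF two])
  have "card (fst ` L \<alpha> i) = card ({x::'k. x^2 = -2*(1+\<alpha>)} \<times> {y::'k. y^2 = 2})"
    unfolding eq by (rule card_image[OF inj_on_subset[OF inj subset_UNIV]])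
  also have "\<dots> = 4" unfolding card_cartesian_product k1 k2 by simp
  finally show ?thesis .
next
  assume i: "i = Suc (Suc 0)"
  have eq: "fst ` L \<alpha> i = (\<lambda>(x,y). P4 x (-1) y 1) ` ({x::'k. x^2 = -2*(1-\<alpha>)} \<times> {y::'k. y^2 = -2})"
    unfolding i by force
  have inj: "inj (\<lambda>(x::'k,y::'k). P4 x (-1) y 1)" by (auto simp: inj_def)
  have k1: "card {x::'k. x^2 = -2*(1-\<alpha>)} = 2" by (rule sq2[OF c2[OF two a0 ap am]])
  have k2: "card {y::'k. y^2 = -2} = 2" by (rule sq2[OF c3[OF two a0 ap am]])
  have "card (fst ` L \<alpha> i) = card ({x::'k. x^2 = -2*(1-\<alpha>)} \<times> {y::'k. y^2 = -2})"
    unfolding eq by (rule card_image[OF inj_on_subset[OF inj subset_UNIV]])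
  also have "\<dots> = 4" unfolding card_cartesian_product k1 k2 by simp
  finally show ?thesis .
next
  assume i: "i = Suc (Suc (Suc 0))"
  have eq: "fst ` L \<alpha> i = (\<lambda>(x,y). P4 x y 0 1) ` ({x::'k. x^2 = -2} \<times> {y::'k. y^2 = -1})"
    unfolding i by force
  have inj: "inj (\<lambda>(x::'k,y::'k). P4 x y 0 1)" by (auto simp: inj_def)
  have k1: "card {x::'k. x^2 = -2} = 2" by (rule sq2[OF c3[OF two a0 ap am]])
  have k2: "card {y::'k. y^2 = -1} = 2" by (rule sq2[OF c4[OF two a0 ap am]])
  have "card (fst ` L \<alpha> i) = card ({x::'k. x^2 = -2} \<times> {y::'k. y^2 = -1})"
    unfolding eq by (rule card_image[OF inj_on_subset[OF inj subset_UNIV]])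
  also have "\<dots> = 4" unfolding card_cartesian_product k1 k2 by simp
  finally show ?thesis .
next
  assume i: "i = Suc (Suc (Suc (Suc 0)))"
  define Q where "Q = {x::'k. \<alpha>*x^2 + 2*x + \<alpha> = 0}"
  have cQ: "card Q = 2" unfolding Q_def by (rule card_quad[OF ac two a0 ap am])
  have eq: "fst ` L \<alpha> i = (\<lambda>(x,y). P4 0 x y 1) ` (SIGMA x:Q. {y. \<alpha>*y^2 = -2*x^2})"
    unfolding i Q_def by force
  have inj: "inj (\<lambda>(x::'k,y::'k). P4 0 x y 1)" by (auto simp: inj_def)
  have B: "card {y. \<alpha>*y^2 = -2*x^2} = 2" if "x \<in> Q" for x
  proof -
    have x0: "x \<noteq> 0" using that a0 unfolding Q_def by auto
    have "{y. \<alpha>*y^2 = -2*x^2} = {y. y^2 = -2*x^2/\<alpha>}" using a0 by (auto simp: field_simps)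
    moreover have "-2*x^2/\<alpha> \<noteq> 0" using x0 a0 two by simp
    ultimately show ?thesis using sq2 by simp
  qed
  have fQ: "finite Q" using cQ card_gt_0_iff by fastforce
  have fB: "\<forall>x\<in>Q. finite {y. \<alpha>*y^2 = -2*x^2}" using B card_gt_0_iff by (metis zero_less_numeral)
  have "card (SIGMA x:Q. {y. \<alpha>*y^2 = -2*x^2}) = (\<Sum>x\<in>Q. card {y. \<alpha>*y^2 = -2*x^2})"
    using fQ fB by simp
  also have "\<dots> = (\<Sum>x\<in>Q. 2)" using B by simp
  also have "\<dots> = 4" using cQ by simp
  finally show ?thesis unfolding eq by (simp add: card_image inj_on_subset[OF inj])
qed

lemma card_frakp: "card (frakp \<alpha>) = 20"
proof -
  have cZ: "card (Z \<alpha> i) = 4" if "i \<in> {..4}" for i using that cardZ_fst card_fst by simp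
  have fZ: "\<forall>i\<in>{..4}. finite (Z \<alpha> i)" using cZ card_gt_0_iff by (metis zero_less_numeral)
  have disj: "\<forall>i\<in>{..4}. \<forall>j\<in>{..4}. i \<noteq> j \<longrightarrow> Z \<alpha> i \<inter> Z \<alpha> j = {}"
  proof (intro ballI impI)
    fix i j :: nat assume i: "i \<in> {..4}" and j: "j \<in> {..4}" and ij: "i \<noteq> j"
    show "Z \<alpha> i \<inter> Z \<alpha> j = {}"
    proof (rule ccontr)
      assume "Z \<alpha> i \<inter> Z \<alpha> j \<noteq> {}"
      then obtain a b a' b' where ab: "(a,b) \<in> L \<alpha> i" and ab': "(a',b') \<in> L \<alpha> j"
        and eq: "proj_class a = proj_class a'" unfolding Z_def by auto
      have "a \<noteq> zero4" "a' \<noteq> zero4" using Lsound''[OF ab] Lsound''[OF ab'] i j by auto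
      then obtain c where "c \<noteq> 0" "a' = smul4 c a" using eq cls_eq_iff by metis
      then show False using Lclass'[OF ab _ ab'] i j ij by auto
    qed
  qed
  have "card (frakp \<alpha>) = (\<Sum>i\<in>{..4}. card (Z \<alpha> i))"
    unfolding frakp_eq[OF two a0 ap am] by (rule card_UN_disjoint[OF _ fZ disj]) simp
  also have "\<dots> = (\<Sum>i\<in>{..4::nat}. 4)" using cZ by simp
  also have "\<dots> = 20" by simp
  finally show ?thesis .
qed

end


context
  fixes \<alpha> :: "'k::field"
  assumes ac: "alg_closed TYPE('k)"
    and two: "(2::'k) \<noteq> 0" and a0: "\<alpha> \<noteq> 0" and ap: "1 + \<alpha> \<noteq> 0" and am: "1 - \<alpha> \<noteq> 0"
begin

lemma orbit_facts:
  shows "card (sigma_orbit \<alpha> ` frakp \<alpha>) = 10"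
    and "\<forall>Orb \<in> sigma_orbit \<alpha> ` frakp \<alpha>. card Orb = 2"
proof -
  note fp = frakp_props[OF two a0 ap am]
  note orb = orbit[OF two a0 ap am]
  have cf: "card (frakp \<alpha>) = 20" by (rule card_frakp[OF ac two a0 ap am])
  have ff: "finite (frakp \<alpha>)" using cf card_gt_0_iff by (metis zero_less_numeral)
  have c2: "\<forall>Orb \<in> sigma_orbit \<alpha> ` frakp \<alpha>. card Orb = 2"
  proof
    fix Orb assume "Orb \<in> sigma_orbit \<alpha> ` frakp \<alpha>"
    then obtain P where P: "P \<in> frakp \<alpha>" "Orb = sigma_orbit \<alpha> P" by blast
    show "card Orb = 2" using P orb[OF P(1)] fp(2)[OF P(1)] by auto
  qed
  then show "\<forall>Orb \<in> sigma_orbit \<alpha> ` frakp \<alpha>. card Orb = 2" .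
  have U: "\<Union>(sigma_orbit \<alpha> ` frakp \<alpha>) = frakp \<alpha>"
  proof (intro equalityI subsetI)
    fix x assume "x \<in> \<Union>(sigma_orbit \<alpha> ` frakp \<alpha>)"
    then obtain P where P: "P \<in> frakp \<alpha>" "x \<in> sigma_orbit \<alpha> P" by blast
    then show "x \<in> frakp \<alpha>" using orb[OF P(1)] fp(3)[OF P(1)] by auto
  next
    fix x assume x: "x \<in> frakp \<alpha>"
    then have "x \<in> sigma_orbit \<alpha> x" using orb[OF x] by simp
    then show "x \<in> \<Union>(sigma_orbit \<alpha> ` frakp \<alpha>)" using x by blast
  qed
  have disj: "\<forall>c1 \<in> sigma_orbit \<alpha> ` frakp \<alpha>. \<forall>c2 \<in> sigma_orbit \<alpha> ` frakp \<alpha>. c1 \<noteq> c2 \<longrightarrow> c1 \<inter> c2 = {}"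
  proof (intro ballI impI)
    fix c1 c2 assume "c1 \<in> sigma_orbit \<alpha> ` frakp \<alpha>" "c2 \<in> sigma_orbit \<alpha> ` frakp \<alpha>" and ne: "c1 \<noteq> c2"
    obtain P where P0: "P \<in> frakp \<alpha>" "c1 = sigma_orbit \<alpha> P" using \<open>c1 \<in> sigma_orbit \<alpha> ` frakp \<alpha>\<close> by (rule imageE) simp
    obtain P' where P0': "P' \<in> frakp \<alpha>" "c2 = sigma_orbit \<alpha> P'" using \<open>c2 \<in> sigma_orbit \<alpha> ` frakp \<alpha>\<close> by (rule imageE) simp
    have P: "c1 = {P, sigma \<alpha> P}" using P0 orb[OF P0(1)] by simp
    have P': "c2 = {P', sigma \<alpha> P'}" using P0' orb[OF P0'(1)] by simp
    have s1: "sigma \<alpha> (sigma \<alpha> P) = P" by (rule fp(1)[OF P0(1)])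
    have s2: "sigma \<alpha> (sigma \<alpha> P') = P'" by (rule fp(1)[OF P0'(1)])
    show "c1 \<inter> c2 = {}"
    proof (rule ccontr)
      assume "c1 \<inter> c2 \<noteq> {}"
      then obtain x where x: "x \<in> {P, sigma \<alpha> P}" "x \<in> {P', sigma \<alpha> P'}" using P P' by blast
      have "{P, sigma \<alpha> P} = {P', sigma \<alpha> P'}"
      proof -
        consider "x = P" "x = P'" | "x = P" "x = sigma \<alpha> P'" | "x = sigma \<alpha> P" "x = P'"
          | "x = sigma \<alpha> P" "x = sigma \<alpha> P'" using x by blast
        then show ?thesis
        proof cases
          case 1 then show ?thesis by simp
        next
          case 2 then have "sigma \<alpha> P = P'" using s2 by simp
          then show ?thesis using 2 by blast
        next
          case 3 then have "sigma \<alpha> P' = P" using s1 by simp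
          then show ?thesis using 3 by blast
        next
          case 4 then have "P = P'" using s1 s2 by metis
          then show ?thesis by simp
        qed
      qed
      then show False using ne P P' by simp
    qed
  qed
  have "2 * card (sigma_orbit \<alpha> ` frakp \<alpha>) = card (\<Union>(sigma_orbit \<alpha> ` frakp \<alpha>))"
  proof (rule card_partition)
    show "finite (sigma_orbit \<alpha> ` frakp \<alpha>)" by (rule finite_imageI[OF ff])
    show "finite (\<Union>(sigma_orbit \<alpha> ` frakp \<alpha>))" using U ff by simp
    show "\<And>c. c \<in> sigma_orbit \<alpha> ` frakp \<alpha> \<Longrightarrow> card c = 2" using c2 by blast
    show "\<And>c1 c2. c1 \<in> sigma_orbit \<alpha> ` frakp \<alpha> \<Longrightarrow> c2 \<in> sigma_orbit \<alpha> ` frakp \<alpha> \<Longrightarrow> c1 \<noteq> c2 \<Longrightarrow> c1 \<inter> c2 = {}"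
      using disj by blast
  qed
  then show "card (sigma_orbit \<alpha> ` frakp \<alpha>) = 10" using U cf by simp
qed

end

theorem corollary2p3:
  fixes \<alpha> :: "'k::field"
  assumes "alg_closed TYPE('k)"
    and "(2::'k) \<noteq> 0"
    and "\<alpha> * (1 - \<alpha>^2) \<noteq> 0"
  shows "Gamma \<alpha> = (\<Union>i\<le>4. (\<lambda>(a, b). (proj_class a, proj_class b)) ` L \<alpha> i)
    \<and> (\<forall>(P, Q) \<in> Gamma \<alpha>. Q = sigma \<alpha> P)
    \<and> (\<forall>i\<le>4. sigma \<alpha> ` Z \<alpha> i = Z \<alpha> i)
    \<and> card (sigma_orbit \<alpha> ` frakp \<alpha>) = 10
    \<and> (\<forall>Orb \<in> sigma_orbit \<alpha> ` frakp \<alpha>. card Orb = 2)"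
proof -
  have a0: "\<alpha> \<noteq> 0" and q: "1 - \<alpha>^2 \<noteq> 0" using assms(3) by auto
  have "(1 - \<alpha>) * (1 + \<alpha>) = 1 - \<alpha>^2" by (simp add: algebra_simps power2_eq_square)
  then have "(1 - \<alpha>) * (1 + \<alpha>) \<noteq> 0" using q by simp
  then have am: "1 - \<alpha> \<noteq> 0" and ap: "1 + \<alpha> \<noteq> 0" by auto
  note two = assms(2) and ac = assms(1)
  have 1: "Gamma \<alpha> = (\<Union>i\<le>4. (\<lambda>(a, b). (proj_class a, proj_class b)) ` L \<alpha> i)"
    by (rule Gamma_eq[OF two a0 ap am])
  have 2: "\<forall>(P, Q) \<in> Gamma \<alpha>. Q = sigma \<alpha> P"
    using sigma_eq[OF two a0 ap am] by auto
  have 3: "\<forall>i\<le>4. sigma \<alpha> ` Z \<alpha> i = Z \<alpha> i"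
    using Zinv[OF two a0 ap am] by auto
  show ?thesis using 1 2 3 orbit_facts[OF ac two a0 ap am] by blast
qed

end
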